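(* Consider the linear regression model $\boldsymbol{Y}=\boldsymbol{X}\boldsymbol{\theta}+\boldsymbol{\epsilon}$ with $\boldsymbol{Y}\in\mathbb{R}^n$, $\boldsymbol{X}$ an $n\times p$ design matrix, $\boldsymbol{\theta}\in\mathbb{R}^p$ and $\boldsymbol{\epsilon}\sim N_n(\boldsymbol{0},\sigma^2\boldsymbol{I}_n)$. Let $m^\ast=\{j:\theta_j\neq 0\}$ be the true model and $m_{\mathrm{full}}=\{1,\dots,p\}$. Let $\widehat{m}\subseteq m_{\mathrm{full}}$ be the model selected by a given model selection procedure applied to the sample $D$ of size $n$, and let $\widehat{m}^{(1)},\dots,\widehat{m}^{(B)}$ be the models obtained by applying the same procedure to bootstrap samples $D^{(1)},\dots,D^{(B)}$ generated from $D$. Fix $\alpha\in(0,1)$. Assume: (A.1) (model selection consistency) $P(\widehat{m}\not\supseteq m^\ast)=o(1)$ and $P(\widehat{m}\supsetneqq m^\ast)=o(1)$ as $n\to\infty$; (A.2) (bootstrap validity) for each resampled model, $P(\widehat{m}^{(b)}\neq\widehat{m})=o(1)$. Let $(\widehat{m}_L,\widehat{m}_U)$ be a solution of the program $$(\widehat{m}_L,\widehat{m}_U)=\underset{(m_1,m_2)\in S}{\arg\min}\left\{|m_2|-|m_1| : \widehat{r}(m_1,m_2)\ge 1-\alpha\right\},$$ where $S=\{(m_1^{(i)},m_2^{(i)}):0\le i\le p\}$ and, for each $i$, $(m_1^{(i)},m_2^{(i)})=\arg\max_{m_1,m_2}\{\widehat{r}(m_1,m_2): |m_2|-|m_1|=i,\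 \emptyset\subseteq m_1\subseteq m_2\subseteq m_{\mathrm{full}}\}$. Then $$P(\widehat{m}_L\subseteq m^\ast\subseteq\widehat{m}_U)\ge 1-\alpha+o(1).$$
   Context: Models are identified with index sets of predictors, i.e. subsets of $\{1,\dots,p\}$; $|m|$ denotes the cardinality of $m$. For nested models $m_1\subseteq m_2$, the bootstrap coverage rate is $\widehat{r}(m_1,m_2)=\frac{1}{B}\sum_{b=1}^B I(m_1\subseteq\widehat{m}^{(b)}\subseteq m_2)$, where $I(\cdot)$ is the indicator function. *)

theory Defs
  imports "HOL-Probability.Probability"
begin

definition m_full :: "nat \<Rightarrow> nat set" where
  "m_full p = {1..p}"

definition true_model :: "nat \<Rightarrow> (nat \<Rightarrow> real) \<Rightarrow> nat set" where
  "true_model p \<theta> = {j \<in> {1..p}. \<theta> j \<noteq> 0}"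

text \<open>Bootstrap coverage rate r(m1,m2) = (1/B) sum_{b=1}^B I(m1 <= mb <= m2),
  where mb is the model selected on the b-th bootstrap sample.\<close>
definition coverage_rate :: "nat \<Rightarrow> (nat \<Rightarrow> nat set) \<Rightarrow> nat set \<Rightarrow> nat set \<Rightarrow> real" where
  "coverage_rate B mb m1 m2 =
     (1 / real B) * (\<Sum>b\<in>{1..B}. if m1 \<subseteq> mb b \<and> mb b \<subseteq> m2 then 1 else 0)"

definition nested_pairs :: "nat \<Rightarrow> nat \<Rightarrow> (nat set \<times> nat set) set" where
  "nested_pairs p i = {(m1, m2). m1 \<subseteq> m2 \<and> m2 \<subseteq> m_full p \<and> card m2 - card m1 = i}"

definition is_level_argmax ::
    "nat \<Rightarrow> (nat set \<Rightarrow> nat set \<Rightarrow> real) \<Rightarrow> nat \<Rightarrow> nat set \<times> nat set \<Rightarrow> bool" where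
  "is_level_argmax p r i mm \<longleftrightarrow>
     mm \<in> nested_pairs p i \<and> (\<forall>(a, b) \<in> nested_pairs p i. r a b \<le> r (fst mm) (snd mm))"

text \<open>(mL,mU) is a solution of the two-stage program: for some choice of
  argmaxes (m1^(i),m2^(i)), i = 0..p, forming S, (mL,mU) is in S, satisfies
  r(mL,mU) >= 1 - alpha and minimises |m2| - |m1| among elements of S with
  r >= 1 - alpha.\<close>
definition is_mcs_solution ::
    "nat \<Rightarrow> real \<Rightarrow> (nat set \<Rightarrow> nat set \<Rightarrow> real) \<Rightarrow> nat set \<Rightarrow> nat set \<Rightarrow> bool" where
  "is_mcs_solution p \<alpha> r mL mU \<longleftrightarrow>
     (\<exists>sel :: nat \<Rightarrow> nat set \<times> nat set.
        (\<forall>i\<in>{0..p}. is_level_argmax p r i (sel i)) \<and>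
        (mL, mU) \<in> sel ` {0..p} \<and>
        r mL mU \<ge> 1 - \<alpha> \<and>
        (\<forall>(m1, m2) \<in> sel ` {0..p}. r m1 m2 \<ge> 1 - \<alpha> \<longrightarrow>
             card mU - card mL \<le> card m2 - card m1))"

end

theory Submission
  imports Defs
begin

lemma cov_const:
  assumes "B \<ge> 1" "\<And>b. b \<in> {1..B} \<Longrightarrow> mb b = T"
  shows "coverage_rate B mb m1 m2 = (if m1 \<subseteq> T \<and> T \<subseteq> m2 then 1 else 0)"
proof -
  have "(\<Sum>b\<in>{1..B}. if m1 \<subseteq> mb b \<and> mb b \<subseteq> m2 then 1 else 0 :: real)
      = (\<Sum>b\<in>{1..B}. if m1 \<subseteq> T \<and> T \<subseteq> m2 then 1 else 0)"
    using assms(2) by (intro sum.cong) auto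
  also have "\<dots> = real B * (if m1 \<subseteq> T \<and> T \<subseteq> m2 then 1 else 0)" by simp
  finally show ?thesis using assms(1) unfolding coverage_rate_def by simp
qed

theorem theorem1:
  fixes M :: "nat \<Rightarrow> 'a measure"
    and p B :: nat
    and \<theta> :: "nat \<Rightarrow> real"
    and \<alpha> :: real
    and mhat :: "nat \<Rightarrow> 'a \<Rightarrow> nat set"
    and mboot :: "nat \<Rightarrow> nat \<Rightarrow> 'a \<Rightarrow> nat set"
    and mL mU :: "nat \<Rightarrow> 'a \<Rightarrow> nat set"
  assumes prob: "\<And>n. prob_space (M n)"
    and alpha: "0 < \<alpha>" "\<alpha> < 1"
    and B_pos: "B \<ge> 1"
    and mhat_range: "\<And>n \<omega>. \<omega> \<in> space (M n) \<Longrightarrow> mhat n \<omega> \<subseteq> m_full p"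
    and mboot_range: "\<And>n b \<omega>. b \<in> {1..B} \<Longrightarrow> \<omega> \<in> space (M n) \<Longrightarrow> mboot n b \<omega> \<subseteq> m_full p"
    and mhat_meas: "\<And>n. mhat n \<in> measurable (M n) (count_space UNIV)"
    and mboot_meas: "\<And>n b. b \<in> {1..B} \<Longrightarrow> mboot n b \<in> measurable (M n) (count_space UNIV)"
    and mL_meas: "\<And>n. mL n \<in> measurable (M n) (count_space UNIV)"
    and mU_meas: "\<And>n. mU n \<in> measurable (M n) (count_space UNIV)"
    and A1_under: "(\<lambda>n. measure (M n) {\<omega> \<in> space (M n). \<not> true_model p \<theta> \<subseteq> mhat n \<omega>})
                     \<longlonglongrightarrow> 0"
    and A1_over: "(\<lambda>n. measure (M n) {\<omega> \<in> space (M n). true_model p \<theta> \<subset> mhat n \<omega>})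
                     \<longlonglongrightarrow> 0"
    and A2: "\<And>b. b \<in> {1..B} \<Longrightarrow>
               (\<lambda>n. measure (M n) {\<omega> \<in> space (M n). mboot n b \<omega> \<noteq> mhat n \<omega>}) \<longlonglongrightarrow> 0"
    and solution: "\<And>n \<omega>. \<omega> \<in> space (M n) \<Longrightarrow>
               is_mcs_solution p \<alpha> (coverage_rate B (\<lambda>b. mboot n b \<omega>)) (mL n \<omega>) (mU n \<omega>)"
  shows "\<exists>e :: nat \<Rightarrow> real. e \<longlonglongrightarrow> 0 \<and>
           (\<forall>n. measure (M n) {\<omega> \<in> space (M n). mL n \<omega> \<subseteq> true_model p \<theta> \<and>
                                              true_model p \<theta> \<subseteq> mU n \<omega>}
                  \<ge> 1 - \<alpha> + e n)"
  proof -
  let ?T = "true_model p \<theta>"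
  define P1 where "P1 n = measure (M n) {\<omega> \<in> space (M n). \<not> ?T \<subseteq> mhat n \<omega>}" for n
  define P2 where "P2 n = measure (M n) {\<omega> \<in> space (M n). ?T \<subset> mhat n \<omega>}" for n
  define PB where "PB n b = measure (M n) {\<omega> \<in> space (M n). mboot n b \<omega> \<noteq> mhat n \<omega>}" for n b
  define s where "s n = P1 n + P2 n + (\<Sum>b\<in>{1..B}. PB n b)" for n
  have s0: "s \<longlonglongrightarrow> 0"
    unfolding s_def using A1_under A1_over A2
    by (auto simp: P1_def P2_def PB_def intro!: tendsto_add_zero tendsto_null_sum)
  have bound: "measure (M n) {\<omega> \<in> space (M n). mL n \<omega> \<subseteq> ?T \<and> ?T \<subseteq> mU n \<omega>} \<ge> 1 - s n" for n
  proof -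
    interpret prob_space "M n" by (rule prob)
    have msets: "{\<omega> \<in> space (M n). Q (f \<omega>)} \<in> sets (M n)"
      if "f \<in> measurable (M n) (count_space UNIV)" for f :: "'a \<Rightarrow> nat set" and Q
    proof -
      have "{\<omega> \<in> space (M n). Q (f \<omega>)} = f -` {x. Q x} \<inter> space (M n)" by auto
      thus ?thesis using measurable_sets[OF that, of "{x. Q x}"] by simp
    qed
    let ?G = "{\<omega> \<in> space (M n). mL n \<omega> \<subseteq> ?T \<and> ?T \<subseteq> mU n \<omega>}"
    let ?A1 = "{\<omega> \<in> space (M n). \<not> ?T \<subseteq> mhat n \<omega>}"
    let ?A2 = "{\<omega> \<in> space (M n). ?T \<subset> mhat n \<omega>}"
    let ?C = "\<lambda>b. {\<omega> \<in> space (M n). mboot n b \<omega> \<noteq> mhat n \<omega>}"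
    have G: "?G \<in> sets (M n)"
    proof -
      have "?G = {\<omega> \<in> space (M n). mL n \<omega> \<subseteq> ?T} \<inter> {\<omega> \<in> space (M n). ?T \<subseteq> mU n \<omega>}" by auto
      thus ?thesis using msets[OF mL_meas] msets[OF mU_meas] by auto
    qed
    have A1: "?A1 \<in> sets (M n)" and A2s: "?A2 \<in> sets (M n)" using msets[OF mhat_meas] by auto
    have Cs: "?C b \<in> sets (M n)" if "b \<in> {1..B}" for b
    proof -
      have "?C b = (\<Union>S\<in>Pow (m_full p). {\<omega> \<in> space (M n). mhat n \<omega> = S} \<inter> {\<omega> \<in> space (M n). mboot n b \<omega> \<noteq> S})"
        using mhat_range by auto
      moreover have "finite (Pow (m_full p))" by (simp add: m_full_def)
      ultimately show ?thesis
        using msets[OF mhat_meas] msets[OF mboot_meas[OF that]] by (auto intro!: sets.finite_UN)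
    qed
    have sub: "space (M n) - ?G \<subseteq> (?A1 \<union> ?A2) \<union> (\<Union>b\<in>{1..B}. ?C b)"
    proof
      fix \<omega> assume w: "\<omega> \<in> space (M n) - ?G"
      show "\<omega> \<in> (?A1 \<union> ?A2) \<union> (\<Union>b\<in>{1..B}. ?C b)"
      proof (rule ccontr)
        assume nb: "\<omega> \<notin> (?A1 \<union> ?A2) \<union> (\<Union>b\<in>{1..B}. ?C b)"
        have hT: "mhat n \<omega> = ?T" using nb w by auto
        have bT: "\<And>b. b \<in> {1..B} \<Longrightarrow> mboot n b \<omega> = ?T" using nb w hT by auto
        from solution[of \<omega> n] w have "coverage_rate B (\<lambda>b. mboot n b \<omega>) (mL n \<omega>) (mU n \<omega>) \<ge> 1 - \<alpha>"
          by (auto simp: is_mcs_solution_def)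
        hence "mL n \<omega> \<subseteq> ?T \<and> ?T \<subseteq> mU n \<omega>"
          using cov_const[OF B_pos, of "\<lambda>b. mboot n b \<omega>" ?T] bT alpha
          by (auto split: if_splits)
        thus False using w by auto
      qed
    qed
    have "measure (M n) (space (M n) - ?G) \<le> measure (M n) ((?A1 \<union> ?A2) \<union> (\<Union>b\<in>{1..B}. ?C b))"
      using A1 A2s Cs by (intro finite_measure_mono[OF sub]) auto
    also have "\<dots> \<le> measure (M n) (?A1 \<union> ?A2) + measure (M n) (\<Union>b\<in>{1..B}. ?C b)"
      using A1 A2s Cs by (intro measure_Un_le) auto
    also have "\<dots> \<le> (P1 n + P2 n) + (\<Sum>b\<in>{1..B}. PB n b)"
      using measure_Un_le[OF A1 A2s] measure_UNION_le[of "{1..B}" ?C "M n"] Cs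
      unfolding P1_def P2_def PB_def by (intro add_mono) auto
    finally have "measure (M n) (space (M n) - ?G) \<le> s n" unfolding s_def by simp
    moreover have "measure (M n) (space (M n) - ?G) = 1 - measure (M n) ?G"
      using prob_compl[OF G] by simp
    ultimately show ?thesis by simp
  qed
  show ?thesis
  proof (intro exI conjI allI)
    show "(\<lambda>n. - s n) \<longlonglongrightarrow> 0" using tendsto_minus[OF s0] by simp
    fix n show "measure (M n) {\<omega> \<in> space (M n). mL n \<omega> \<subseteq> ?T \<and> ?T \<subseteq> mU n \<omega>} \<ge> 1 - \<alpha> + - s n"
      using bound[of n] alpha by simp
  qed
qed

end
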